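(* Let $k$ be a positive integer. If $H$ is a thickened $4k$-path, then $\mathrm{ecrw}(H)\ge k$.
   Context: A thickened $n$-path is the graph obtained from the path on $n$ vertices by replacing each edge by $n$ internally vertex-disjoint paths of length two; explicitly, vertices $u_1,\dots,u_n$ and $v_{i,j}$ ($i\in[n-1]$, $j\in[n]$), with edges $u_iv_{i,j}$ and $u_{i+1}v_{i,j}$. A tree-cut decomposition of a graph $G$ is a pair $\mathcal{T}=(T,\{X_t\}_{t\in V(T)})$ where $T$ is a tree and the bags $X_t\subseteq V(G)$ are pairwise disjoint (possibly empty) with $\bigcup_{t\in V(T)}X_t=V(G)$. For a node $t$ of $T$, let $T_1,\dots,T_m$ be the connected components of $T-t$ and $Z_i=\bigcup_{s\in V(T_i)}X_s$; $\mathrm{cross}_{\mathcal{T}}(t)$ is the number of edges of $G$ whose two endpoints lie in two distinct sets among $Z_1,\dots,Z_m$ (if $T$ has one node, $\mathrm{cross}_{\mathcal T}(t)=0$). The crossing number of $\mathcal{T}$ is $\max_{t}\mathrm{cross}_{\mathcal{T}}(t)$, and the thickness of $\mathcal{T}$ is $\max_t|X_t|$. The edge-crossing width of $\mathcal T$ is the maximum of its crossing number and its thickness, and $\mathrm{ecrw}(G)$ is the minimum edge-crossing width over all tree-cut decompositions of $G$. *)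

theory Defs
  imports Main
begin

definition simple_graph :: "'a set \<Rightarrow> 'a set set \<Rightarrow> bool" where
  "simple_graph V E \<longleftrightarrow> finite V \<and> (\<forall>e\<in>E. \<exists>x y. x \<in> V \<and> y \<in> V \<and> x \<noteq> y \<and> e = {x, y})"

definition adj_in :: "'a set set \<Rightarrow> 'a set \<Rightarrow> 'a \<Rightarrow> 'a \<Rightarrow> bool" where
  "adj_in E S a b \<longleftrightarrow> a \<in> S \<and> b \<in> S \<and> a \<noteq> b \<and> {a, b} \<in> E"

definition conn_in :: "'a set set \<Rightarrow> 'a set \<Rightarrow> 'a \<Rightarrow> 'a \<Rightarrow> bool" where
  "conn_in E S a b \<longleftrightarrow> a \<in> S \<and> b \<in> S \<and> (adj_in E S)\<^sup>*\<^sup>* a b"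

text \<open>A tree: a finite nonempty connected graph that is acyclic, i.e. every edge is a
  bridge (removing it disconnects its endpoints).\<close>

definition is_tree :: "'a set \<Rightarrow> 'a set set \<Rightarrow> bool" where
  "is_tree N ET \<longleftrightarrow> simple_graph N ET \<and> N \<noteq> {}
     \<and> (\<forall>a\<in>N. \<forall>b\<in>N. conn_in ET N a b)
     \<and> (\<forall>e\<in>ET. \<forall>a b. e = {a, b} \<longrightarrow> \<not> conn_in (ET - {e}) N a b)"

definition tree_cut_decomp ::
  "'a set \<Rightarrow> 'a set set \<Rightarrow> 'b set \<Rightarrow> 'b set set \<Rightarrow> ('b \<Rightarrow> 'a set) \<Rightarrow> bool" where
  "tree_cut_decomp V E N ET X \<longleftrightarrow> is_tree N ET
     \<and> (\<forall>s\<in>N. \<forall>t\<in>N. s \<noteq> t \<longrightarrow> X s \<inter> X t = {})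
     \<and> (\<Union>t\<in>N. X t) = V"

text \<open>cross(t): number of edges of G whose endpoints lie in bags of two nodes
  belonging to distinct components of T - t (i.e. in distinct sets Z_i).\<close>

definition tcd_cross ::
  "'a set set \<Rightarrow> 'b set \<Rightarrow> 'b set set \<Rightarrow> ('b \<Rightarrow> 'a set) \<Rightarrow> 'b \<Rightarrow> nat" where
  "tcd_cross E N ET X t = card {e\<in>E. \<exists>x y s1 s2. e = {x, y} \<and>
       s1 \<in> N - {t} \<and> s2 \<in> N - {t} \<and> x \<in> X s1 \<and> y \<in> X s2 \<and>
       \<not> conn_in ET (N - {t}) s1 s2}"

definition tcd_crossing_number ::
  "'a set set \<Rightarrow> 'b set \<Rightarrow> 'b set set \<Rightarrow> ('b \<Rightarrow> 'a set) \<Rightarrow> nat" where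
  "tcd_crossing_number E N ET X = Max ((\<lambda>t. tcd_cross E N ET X t) ` N)"

definition tcd_thickness :: "'b set \<Rightarrow> ('b \<Rightarrow> 'a set) \<Rightarrow> nat" where
  "tcd_thickness N X = Max ((\<lambda>t. card (X t)) ` N)"

definition tcd_ecr_width ::
  "'a set set \<Rightarrow> 'b set \<Rightarrow> 'b set set \<Rightarrow> ('b \<Rightarrow> 'a set) \<Rightarrow> nat" where
  "tcd_ecr_width E N ET X = max (tcd_crossing_number E N ET X) (tcd_thickness N X)"

text \<open>Tree nodes are
  taken from type nat, which is no restriction since every finite tree is isomorphic
  to one whose nodes are natural numbers.\<close>

definition ecrw :: "'a set \<Rightarrow> 'a set set \<Rightarrow> nat" where
  "ecrw V E = (LEAST w. \<exists>(N :: nat set) ET X.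
       tree_cut_decomp V E N ET X \<and> tcd_ecr_width E N ET X = w)"

datatype tp_vertex = U nat | W nat nat

definition thick_path_V :: "nat \<Rightarrow> tp_vertex set" where
  "thick_path_V n = {U i | i. 1 \<le> i \<and> i \<le> n}
     \<union> {W i j | i j. 1 \<le> i \<and> i \<le> n - 1 \<and> 1 \<le> j \<and> j \<le> n}"

definition thick_path_E :: "nat \<Rightarrow> tp_vertex set set" where
  "thick_path_E n = {{U i, W i j} | i j. 1 \<le> i \<and> i \<le> n - 1 \<and> 1 \<le> j \<and> j \<le> n}
     \<union> {{U (i + 1), W i j} | i j. 1 \<le> i \<and> i \<le> n - 1 \<and> 1 \<le> j \<and> j \<le> n}"

end

theory Submission
  imports Defs
begin

lemma adj_sym: "adj_in E S a b = adj_in E S b a"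
  unfolding adj_in_def by (auto simp: insert_commute)

lemma rt_sym: "(adj_in E S)\<^sup>*\<^sup>* a b \<Longrightarrow> (adj_in E S)\<^sup>*\<^sup>* b a"
proof (induction rule: rtranclp.induct)
  case (rtrancl_refl a) then show ?case by simp
next
  case (rtrancl_into_rtrancl a b c)
  have "adj_in E S c b" using rtrancl_into_rtrancl(2) by (rule adj_sym[THEN iffD1])
  from converse_rtranclp_into_rtranclp[OF this rtrancl_into_rtrancl(3)] show ?case .
qed

lemma conn_sym: assumes "conn_in E S a b" shows "conn_in E S b a"
  using assms rt_sym[of E S a b] unfolding conn_in_def by blast

lemma conn_trans: "conn_in E S a b \<Longrightarrow> conn_in E S b c \<Longrightarrow> conn_in E S a c"
  unfolding conn_in_def by (auto intro: rtranclp_trans)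

lemma rt_mono: "(adj_in E S)\<^sup>*\<^sup>* a b \<Longrightarrow> (\<And>u v. adj_in E S u v \<Longrightarrow> adj_in E' S' u v)
   \<Longrightarrow> (adj_in E' S')\<^sup>*\<^sup>* a b"
proof (induction rule: rtranclp.induct)
  case (rtrancl_refl a) then show ?case by simp
next
  case (rtrancl_into_rtrancl a b c)
  then show ?case by (meson rtranclp.rtrancl_into_rtrancl)
qed

lemma conn_avoid:
  assumes "conn_in E S x y" "c \<in> e" "c \<notin> S" "S \<subseteq> S'"
  shows "conn_in (E - {e}) S' x y"
proof -
  have "\<And>u v. adj_in E S u v \<Longrightarrow> adj_in (E - {e}) S' u v"
    using assms(2-4) unfolding adj_in_def by auto
  note h = this
  have r: "(adj_in E S)\<^sup>*\<^sup>* x y" using assms(1) unfolding conn_in_def by blast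
  have "(adj_in (E - {e}) S')\<^sup>*\<^sup>* x y" by (rule rt_mono[OF r h])
  then show ?thesis using assms(1,4) unfolding conn_in_def by blast
qed

lemma first_step:
  assumes "(adj_in E S)\<^sup>*\<^sup>* y b" "y \<in> S" "b \<noteq> x"
  shows "conn_in E (S-{x}) y b \<or> (\<exists>c. adj_in E S x c \<and> conn_in E (S-{x}) c b)"
  using assms
proof (induction rule: converse_rtranclp_induct)
  case base
  then show ?case unfolding conn_in_def by auto
next
  case (step y z)
  have zS: "z \<in> S" using step(1) unfolding adj_in_def by auto
  from step(3)[OF zS step(5)] show ?case
  proof
    assume h: "conn_in E (S - {x}) z b"
    show ?thesis
    proof (cases "y = x")
      case True then show ?thesis using step(1) h by blast
    next
      case False
      have "adj_in E (S - {x}) y z" using step(1) h False unfolding adj_in_def conn_in_def by auto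
      then have "conn_in E (S - {x}) y b" using h unfolding conn_in_def adj_in_def
        by (auto intro: converse_rtranclp_into_rtranclp)
      then show ?thesis by blast
    qed
  qed blast
qed

lemma V_U: "1 \<le> i \<Longrightarrow> i \<le> n \<Longrightarrow> U i \<in> thick_path_V n"
  unfolding thick_path_V_def by auto
lemma V_W: "1 \<le> i \<Longrightarrow> i \<le> n - 1 \<Longrightarrow> 1 \<le> j \<Longrightarrow> j \<le> n \<Longrightarrow> W i j \<in> thick_path_V n"
  unfolding thick_path_V_def by auto
lemma E_1: "1 \<le> i \<Longrightarrow> i \<le> n - 1 \<Longrightarrow> 1 \<le> j \<Longrightarrow> j \<le> n \<Longrightarrow> {U i, W i j} \<in> thick_path_E n"
  unfolding thick_path_E_def by blast
lemma E_2: "1 \<le> i \<Longrightarrow> i \<le> n - 1 \<Longrightarrow> 1 \<le> j \<Longrightarrow> j \<le> n \<Longrightarrow> {U (i+1), W i j} \<in> thick_path_E n"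
  unfolding thick_path_E_def by blast

lemma fin_V: "finite (thick_path_V n)"
proof -
  have "thick_path_V n \<subseteq> U ` {1..n} \<union> (\<lambda>(i,j). W i j) ` ({1..n} \<times> {1..n})"
    unfolding thick_path_V_def by force
  then show ?thesis by (rule finite_subset) auto
qed

lemma fin_E: "finite (thick_path_E n)"
proof -
  have "thick_path_E n \<subseteq> Pow (thick_path_V n)"
    unfolding thick_path_E_def thick_path_V_def by force
  then show ?thesis using fin_V by (meson finite_Pow_iff finite_subset)
qed

lemma fin_X:
  assumes "tree_cut_decomp (thick_path_V n) E N ET X" "t \<in> N"
  shows "finite (X t)"
proof -
  have "X t \<subseteq> thick_path_V n" using assms unfolding tree_cut_decomp_def by blast
  then show ?thesis using fin_V finite_subset by blast
qed

lemma inC: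
  "e \<in> E \<Longrightarrow> e = {x,y} \<Longrightarrow> s1 \<in> N - {t} \<Longrightarrow> s2 \<in> N - {t} \<Longrightarrow> x \<in> X s1 \<Longrightarrow> y \<in> X s2
   \<Longrightarrow> \<not> conn_in ET (N - {t}) s1 s2 \<Longrightarrow> e \<in> {e \<in> E. \<exists>x y s1 s2. e = {x, y} \<and>
       s1 \<in> N - {t} \<and> s2 \<in> N - {t} \<and> x \<in> X s1 \<and> y \<in> X s2 \<and>
       \<not> conn_in ET (N - {t}) s1 s2}"
  by blast

lemma gadget:
  assumes tcd: "tree_cut_decomp (thick_path_V n) (thick_path_E n) N ET X"
  and i: "1 \<le> i" "i \<le> n - 1" and t: "t \<in> N" and a: "a \<in> N" "a \<noteq> t"
  and b: "b \<in> N" "b \<noteq> t"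
  and ua: "U i \<in> X a" and ub: "U (i+1) \<in> X b" and nc: "\<not> conn_in ET (N - {t}) a b"
  shows "n \<le> card (X t) + tcd_cross (thick_path_E n) N ET X t"
proof -
  define C where "C = {e \<in> thick_path_E n. \<exists>x y s1 s2. e = {x, y} \<and>
       s1 \<in> N - {t} \<and> s2 \<in> N - {t} \<and> x \<in> X s1 \<and> y \<in> X s2 \<and>
       \<not> conn_in ET (N - {t}) s1 s2}"
  have Cc: "tcd_cross (thick_path_E n) N ET X t = card C" unfolding tcd_cross_def C_def ..
  have finC: "finite C" using fin_E[of n] unfolding C_def by auto
  define J where "J = {j. 1 \<le> j \<and> j \<le> n \<and> W i j \<notin> X t}"
  define K where "K = {j. 1 \<le> j \<and> j \<le> n \<and> W i j \<in> X t}"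
  have key: "\<forall>j\<in>J. {U i, W i j} \<in> C \<or> {U (i+1), W i j} \<in> C"
  proof
    fix j assume j: "j \<in> J"
    then have jj: "1 \<le> j" "j \<le> n" by (auto simp: J_def)
    have wV: "W i j \<in> thick_path_V n" using i jj by (auto intro: V_W)
    then obtain q where q: "q \<in> N" "W i j \<in> X q" using tcd unfolding tree_cut_decomp_def by blast
    have qt: "q \<noteq> t" using q j by (auto simp: J_def)
    show "{U i, W i j} \<in> C \<or> {U (i+1), W i j} \<in> C"
    proof (cases "conn_in ET (N - {t}) a q")
      case True
      then have "\<not> conn_in ET (N-{t}) q b" using nc conn_trans[of ET "N-{t}" a q b] by blast
      then have nbq: "\<not> conn_in ET (N-{t}) b q" using conn_sym[of ET "N-{t}" b q] by blast
      have "{U (i+1), W i j} \<in> thick_path_E n" using E_2 i jj by blast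
      then have "{U (i+1), W i j} \<in> C" unfolding C_def using nbq b q qt ub by (intro inC[of _ _ "U (i+1)" "W i j" b _ _ q]) auto
      then show ?thesis by blast
    next
      case False
      have "{U i, W i j} \<in> thick_path_E n" using E_1 i jj by blast
      then have "{U i, W i j} \<in> C" unfolding C_def using False a q qt ua by (intro inC[of _ _ "U i" "W i j" a _ _ q]) auto
      then show ?thesis by blast
    qed
  qed
  define g where "g j = (if {U i, W i j} \<in> C then {U i, W i j} else {U (i+1), W i j})" for j
  have "inj_on g J" unfolding inj_on_def g_def by (auto split: if_splits simp: doubleton_eq_iff)
  moreover have "g ` J \<subseteq> C" using key by (auto simp: g_def)
  ultimately have cJ: "card J \<le> card C" using card_inj_on_le finC by blast
  have "inj_on (W i) K" unfolding inj_on_def by auto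
  moreover have "W i ` K \<subseteq> X t" by (auto simp: K_def)
  ultimately have cK: "card K \<le> card (X t)" using card_inj_on_le fin_X[OF tcd t] by blast
  have "{1..n} \<subseteq> J \<union> K" by (auto simp: J_def K_def)
  then have "card {1..n} \<le> card (J \<union> K)" by (rule card_mono[rotated]) (auto simp: J_def K_def)
  also have "\<dots> \<le> card J + card K" by (rule card_Un_le)
  finally show ?thesis using cJ cK Cc by simp
qed

lemma adjacent:
  assumes tcd: "tree_cut_decomp (thick_path_V n) (thick_path_E n) N ET X"
  and i: "1 \<le> i" "i \<le> n - 1" and a: "a \<in> N" and b: "b \<in> N" and ab: "a \<noteq> b"
  and e: "{a, b} \<in> ET"
  and ua: "U i \<in> X a" and ub: "U (i+1) \<in> X b"
  shows "n \<le> card (X a) + card (X b) + tcd_cross (thick_path_E n) N ET X a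
             + tcd_cross (thick_path_E n) N ET X b"
proof -
  define Ca where "Ca = {e \<in> thick_path_E n. \<exists>x y s1 s2. e = {x, y} \<and>
       s1 \<in> N - {a} \<and> s2 \<in> N - {a} \<and> x \<in> X s1 \<and> y \<in> X s2 \<and>
       \<not> conn_in ET (N - {a}) s1 s2}"
  define Cb where "Cb = {e \<in> thick_path_E n. \<exists>x y s1 s2. e = {x, y} \<and>
       s1 \<in> N - {b} \<and> s2 \<in> N - {b} \<and> x \<in> X s1 \<and> y \<in> X s2 \<and>
       \<not> conn_in ET (N - {b}) s1 s2}"
  have Cca: "tcd_cross (thick_path_E n) N ET X a = card Ca" unfolding tcd_cross_def Ca_def ..
  have Ccb: "tcd_cross (thick_path_E n) N ET X b = card Cb" unfolding tcd_cross_def Cb_def ..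
  have finCa: "finite Ca" using fin_E[of n] unfolding Ca_def by auto
  have finCb: "finite Cb" using fin_E[of n] unfolding Cb_def by auto
  have tree: "is_tree N ET" using tcd unfolding tree_cut_decomp_def by blast
  have bridge: "\<not> conn_in (ET - {{a,b}}) N a b" using tree e unfolding is_tree_def by blast
  define J1 where "J1 = {j. 1 \<le> j \<and> j \<le> n \<and> W i j \<in> X a}"
  define J2 where "J2 = {j. 1 \<le> j \<and> j \<le> n \<and> W i j \<in> X b}"
  define J3 where "J3 = {j. 1 \<le> j \<and> j \<le> n \<and> {U (i+1), W i j} \<in> Ca}"
  define J4 where "J4 = {j. 1 \<le> j \<and> j \<le> n \<and> {U i, W i j} \<in> Cb}"
  have key: "{1..n} \<subseteq> J1 \<union> J2 \<union> J3 \<union> J4"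
  proof
    fix j assume "j \<in> {1..n}"
    then have jj: "1 \<le> j" "j \<le> n" by auto
    have wV: "W i j \<in> thick_path_V n" using i jj by (auto intro: V_W)
    then obtain q where q: "q \<in> N" "W i j \<in> X q" using tcd unfolding tree_cut_decomp_def by blast
    show "j \<in> J1 \<union> J2 \<union> J3 \<union> J4"
    proof (cases "q = a \<or> q = b")
      case True then show ?thesis using q jj by (auto simp: J1_def J2_def)
    next
      case False
      show ?thesis
      proof (cases "conn_in ET (N-{a}) q b")
        case False
        then have nbq: "\<not> conn_in ET (N-{a}) b q" using conn_sym[of ET "N-{a}" b q] by blast
        have "{U (i+1), W i j} \<in> thick_path_E n" using E_2 i jj by blast
        then have "{U (i+1), W i j} \<in> Ca" unfolding Ca_def using nbq b q \<open>\<not>(q = a \<or> q = b)\<close> ab ub by (intro inC[of _ _ "U (i+1)" "W i j" b _ _ q]) auto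
        then show ?thesis using jj by (auto simp: J3_def)
      next
        case c1: True
        show ?thesis
        proof (cases "conn_in ET (N-{b}) q a")
          case False
          then have naq: "\<not> conn_in ET (N-{b}) a q" using conn_sym[of ET "N-{b}" a q] by blast
          have "{U i, W i j} \<in> thick_path_E n" using E_1 i jj by blast
          then have "{U i, W i j} \<in> Cb" unfolding Cb_def using naq a q \<open>\<not>(q = a \<or> q = b)\<close> ab ua by (intro inC[of _ _ "U i" "W i j" a _ _ q]) auto
          then show ?thesis using jj by (auto simp: J4_def)
        next
          case c2: True
          have h1: "conn_in (ET - {{a,b}}) N q b" using conn_avoid[OF c1, of a "{a,b}" N] by simp
          have h2: "conn_in (ET - {{a,b}}) N q a" using conn_avoid[OF c2, of b "{a,b}" N] by simp
          have "conn_in (ET - {{a,b}}) N a b" using conn_trans[OF conn_sym[OF h2] h1] .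
          then show ?thesis using bridge by blast
        qed
      qed
    qed
  qed
  have "inj_on (W i) J1" unfolding inj_on_def by auto
  moreover have "W i ` J1 \<subseteq> X a" by (auto simp: J1_def)
  ultimately have c1: "card J1 \<le> card (X a)" using card_inj_on_le fin_X[OF tcd a] by blast
  have "inj_on (W i) J2" unfolding inj_on_def by auto
  moreover have "W i ` J2 \<subseteq> X b" by (auto simp: J2_def)
  ultimately have c2: "card J2 \<le> card (X b)" using card_inj_on_le fin_X[OF tcd b] by blast
  have "inj_on (\<lambda>j. {U (i+1), W i j}) J3" unfolding inj_on_def by (auto simp: doubleton_eq_iff)
  moreover have "(\<lambda>j. {U (i+1), W i j}) ` J3 \<subseteq> Ca" by (auto simp: J3_def)
  ultimately have c3: "card J3 \<le> card Ca" using card_inj_on_le finCa by blast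
  have "inj_on (\<lambda>j. {U i, W i j}) J4" unfolding inj_on_def by (auto simp: doubleton_eq_iff)
  moreover have "(\<lambda>j. {U i, W i j}) ` J4 \<subseteq> Cb" by (auto simp: J4_def)
  ultimately have c4: "card J4 \<le> card Cb" using card_inj_on_le finCb by blast
  have "J1 \<subseteq> {..n}" "J2 \<subseteq> {..n}" "J3 \<subseteq> {..n}" "J4 \<subseteq> {..n}"
    by (auto simp: J1_def J2_def J3_def J4_def)
  then have fins: "finite J1" "finite J2" "finite J3" "finite J4"
    using finite_subset by blast+
  have "card {1..n} \<le> card (J1 \<union> J2 \<union> J3 \<union> J4)" using key fins by (intro card_mono) auto
  also have "\<dots> \<le> card (J1 \<union> J2 \<union> J3) + card J4" by (rule card_Un_le)
  also have "\<dots> \<le> card (J1 \<union> J2) + card J3 + card J4" using card_Un_le[of "J1 \<union> J2" J3] by simp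
  also have "\<dots> \<le> card J1 + card J2 + card J3 + card J4" using card_Un_le[of J1 J2] by simp
  finally have "card {1..n} \<le> card J1 + card J2 + card J3 + card J4" .
  moreover have "card {1..n} = n" by simp
  ultimately show ?thesis unfolding Cca Ccb using c1 c2 c3 c4 by linarith
qed


lemma main_contra:
  fixes k n :: nat and N :: "'b set"
  assumes tcd: "tree_cut_decomp (thick_path_V n) (thick_path_E n) N ET X"
  and n: "n = 4 * k" and k: "k \<ge> 1"
  and thick: "\<forall>t\<in>N. card (X t) \<le> k - 1"
  and cross: "\<forall>t\<in>N. tcd_cross (thick_path_E n) N ET X t \<le> k - 1"
  shows False
proof -
  have tree: "is_tree N ET" using tcd unfolding tree_cut_decomp_def by blast
  define p where "p i = (SOME q. q \<in> N \<and> U i \<in> X q)" for i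
  have p: "p i \<in> N \<and> U i \<in> X (p i)" if "1 \<le> i" "i \<le> n" for i
  proof -
    have "U i \<in> thick_path_V n" using that by (rule V_U)
    then have "\<exists>q. q \<in> N \<and> U i \<in> X q" using tcd unfolding tree_cut_decomp_def by blast
    then show ?thesis unfolding p_def by (rule someI_ex)
  qed
  have step: "p (i+1) = p i" if i: "1 \<le> i" "i \<le> n - 1" for i
  proof (rule ccontr)
    assume ne: "p (i+1) \<noteq> p i"
    define a where "a = p i"
    define b where "b = p (i+1)"
    have a: "a \<in> N" "U i \<in> X a" using p[of i] i unfolding a_def by auto
    have b: "b \<in> N" "U (i+1) \<in> X b" using p[of "i+1"] i unfolding b_def by auto
    have ab: "b \<noteq> a" using ne unfolding a_def b_def .
    have "conn_in ET N a b" using tree a b unfolding is_tree_def by blast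
    then have "(adj_in ET N)\<^sup>*\<^sup>* a b" unfolding conn_in_def by blast
    from first_step[OF this a(1) ab]
    obtain c where c: "adj_in ET N a c" "conn_in ET (N - {a}) c b"
      unfolding conn_in_def by blast
    have cN: "c \<in> N" "c \<noteq> a" "{a, c} \<in> ET" using c(1) unfolding adj_in_def by auto
    show False
    proof (cases "c = b")
      case True
      have "n \<le> card (X a) + card (X b) + tcd_cross (thick_path_E n) N ET X a
             + tcd_cross (thick_path_E n) N ET X b"
        using adjacent[OF tcd i a(1) b(1) ab[symmetric] _ a(2) b(2)] cN True by blast
      moreover have "card (X a) \<le> k - 1" "card (X b) \<le> k - 1"
        "tcd_cross (thick_path_E n) N ET X a \<le> k - 1"
        "tcd_cross (thick_path_E n) N ET X b \<le> k - 1"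
        using thick cross a(1) b(1) by auto
      ultimately show False using n k by linarith
    next
      case False
      have nc: "\<not> conn_in ET (N - {c}) a b"
      proof
        assume h: "conn_in ET (N - {c}) a b"
        have h1: "conn_in (ET - {{a,c}}) N a b" using conn_avoid[OF h, of c "{a,c}" N] by simp
        have h2: "conn_in (ET - {{a,c}}) N c b" using conn_avoid[OF c(2), of a "{a,c}" N] by simp
        have "conn_in (ET - {{a,c}}) N a c" using conn_trans[OF h1 conn_sym[OF h2]] .
        moreover have "\<not> conn_in (ET - {{a,c}}) N a c" using tree cN(3) unfolding is_tree_def by blast
        ultimately show False by blast
      qed
      have "n \<le> card (X c) + tcd_cross (thick_path_E n) N ET X c"
        using gadget[OF tcd i cN(1) a(1) cN(2)[symmetric] b(1) False[symmetric] a(2) b(2) nc] .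
      moreover have "card (X c) \<le> k - 1" "tcd_cross (thick_path_E n) N ET X c \<le> k - 1"
        using thick cross cN(1) by auto
      ultimately show False using n k by linarith
    qed
  qed
  have all: "1 \<le> i \<Longrightarrow> i \<le> n \<Longrightarrow> p i = p 1" for i
  proof (induction i)
    case 0 then show ?case by simp
  next
    case (Suc i)
    show ?case
    proof (cases "i = 0")
      case True then show ?thesis by simp
    next
      case False
      then have "p (i+1) = p i" using step[of i] Suc.prems by simp
      then show ?thesis using Suc False by simp
    qed
  qed
  have n1: "1 \<le> n" using n k by simp
  have p1: "p 1 \<in> N" using p[of 1] n1 by simp
  have "U ` {1..n} \<subseteq> X (p 1)"
  proof
    fix v assume "v \<in> U ` {1..n}"
    then obtain i where "v = U i" "1 \<le> i" "i \<le> n" by auto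
    then show "v \<in> X (p 1)" using p[of i] all[of i] by simp
  qed
  moreover have "inj_on U {1..n}" unfolding inj_on_def by simp
  ultimately have "card {1..n} \<le> card (X (p 1))" using card_inj_on_le fin_X[OF tcd p1] by blast
  moreover have "card (X (p 1)) \<le> k - 1" using thick p1 by blast
  ultimately show False using n k by simp
qed

theorem lemma3p14:
  fixes k :: nat
  assumes "k \<ge> 1"
  shows "ecrw (thick_path_V (4 * k)) (thick_path_E (4 * k)) \<ge> k"
proof -
  define V where "V = thick_path_V (4 * k)"
  define E where "E = thick_path_E (4 * k)"
  define P where "P w = (\<exists>(N :: nat set) ET X. tree_cut_decomp V E N ET X \<and> tcd_ecr_width E N ET X = w)" for w
  have "is_tree {0::nat} {}"
    unfolding is_tree_def simple_graph_def conn_in_def by auto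
  then have "tree_cut_decomp V E {0::nat} {} (\<lambda>_. V)"
    unfolding tree_cut_decomp_def by auto
  then have "P (tcd_ecr_width E {0::nat} {} (\<lambda>_. V))" unfolding P_def by blast
  then have "P (Least P)" by (rule LeastI)
  then obtain N :: "nat set" and ET X where tcd: "tree_cut_decomp V E N ET X"
    and w: "tcd_ecr_width E N ET X = Least P" unfolding P_def by blast
  have eq: "ecrw V E = Least P" unfolding ecrw_def P_def ..
  have finN: "finite N" using tcd unfolding tree_cut_decomp_def is_tree_def simple_graph_def by blast
  show ?thesis
  proof (rule ccontr)
    assume "\<not> k \<le> ecrw (thick_path_V (4 * k)) (thick_path_E (4 * k))"
    then have lt: "tcd_ecr_width E N ET X \<le> k - 1" using w eq V_def E_def by simp
    have "\<forall>t\<in>N. card (X t) \<le> k - 1"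
    proof
      fix t assume "t \<in> N"
      then have "card (X t) \<le> tcd_thickness N X" unfolding tcd_thickness_def using finN by simp
      then show "card (X t) \<le> k - 1" using lt unfolding tcd_ecr_width_def by simp
    qed
    moreover have "\<forall>t\<in>N. tcd_cross E N ET X t \<le> k - 1"
    proof
      fix t assume "t \<in> N"
      then have "tcd_cross E N ET X t \<le> tcd_crossing_number E N ET X"
        unfolding tcd_crossing_number_def using finN by simp
      then show "tcd_cross E N ET X t \<le> k - 1" using lt unfolding tcd_ecr_width_def by simp
    qed
    ultimately show False
      using main_contra[of "4*k" N ET X k] tcd assms unfolding V_def E_def by blast
  qed
qed

end
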